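(* Let $\Omega$ be the unit square (if $d=2$) or the unit cube (if $d=3$), and let $\vec u:\Omega\times[0,T]\to\mathbb{R}^d$ with $\vec u\in C^0([0,T];W^{1,\infty}(\Omega))$ satisfy $\vec u\cdot\vec n=0$ on $\partial\Omega$, where $\vec n$ is the outward unit normal. Let $0<\Delta t<T$ be such that $\Delta t\,\|\vec u\|_{C^0([0,T];W^{1,\infty}(\Omega))}<1$. For $\vec x\in\Omega$ and $t\in[\Delta t,T]$ define $\vec y^t_{\Delta t}(\vec x)=\vec x-\Delta t\,\vec u(\vec x,t)$. Then for every $\vec x\in\Omega$ and every $t\in[\Delta t,T]$, $\vec y^t_{\Delta t}(\vec x)\in\Omega$. *)

theory Defs
  imports "HOL-Analysis.Analysis"
begin

definition unit_cube :: "(real^'n) set" where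
  "unit_cube = box 0 One"

definition cube_outward_normal :: "real^'n \<Rightarrow> real^'n \<Rightarrow> bool" where
  "cube_outward_normal x n \<longleftrightarrow>
     (\<exists>i. (\<forall>j. j \<noteq> i \<longrightarrow> 0 < x$j \<and> x$j < 1) \<and>
          ((x$i = 0 \<and> n = - axis i 1) \<or> (x$i = 1 \<and> n = axis i 1)))"

text \<open>W^{1,\<infinity>}(\<Omega>) on the convex domain \<Omega>, represented by its (unique)
Lipschitz representative: bounded and Lipschitz on \<Omega>.\<close>
definition W1inf_on :: "('a::metric_space) set \<Rightarrow> ('a \<Rightarrow> 'b::real_normed_vector) \<Rightarrow> bool" where
  "W1inf_on S f \<longleftrightarrow> bounded (f ` S) \<and> (\<exists>L. \<forall>x\<in>S. \<forall>y\<in>S. dist (f x) (f y) \<le> L * dist x y)"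

text \<open>\<parallel>\<nabla> f\<parallel>_\<infinity> = best Lipschitz constant (operator norm of the gradient, convex domain).\<close>
definition lip_const :: "('a::metric_space) set \<Rightarrow> ('a \<Rightarrow> 'b::real_normed_vector) \<Rightarrow> real" where
  "lip_const S f = Inf {L. 0 \<le> L \<and> (\<forall>x\<in>S. \<forall>y\<in>S. dist (f x) (f y) \<le> L * dist x y)}"

definition W1inf_norm :: "('a::metric_space) set \<Rightarrow> ('a \<Rightarrow> 'b::real_normed_vector) \<Rightarrow> real" where
  "W1inf_norm S f = max (SUP x\<in>S. norm (f x)) (lip_const S f)"

definition C0_W1inf :: "('a::metric_space) set \<Rightarrow> ('a \<Rightarrow> real \<Rightarrow> 'b::real_normed_vector) \<Rightarrow> real \<Rightarrow> bool" where
  "C0_W1inf S u T \<longleftrightarrow>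
     (\<forall>t\<in>{0..T}. W1inf_on S (\<lambda>x. u x t)) \<and>
     (\<forall>t\<in>{0..T}. \<forall>e>0. \<exists>d>0. \<forall>s\<in>{0..T}. \<bar>s - t\<bar> < d \<longrightarrow>
         W1inf_norm S (\<lambda>x. u x s - u x t) < e)"

definition C0_W1inf_norm :: "('a::metric_space) set \<Rightarrow> ('a \<Rightarrow> real \<Rightarrow> 'b::real_normed_vector) \<Rightarrow> real \<Rightarrow> real" where
  "C0_W1inf_norm S u T = (SUP t\<in>{0..T}. W1inf_norm S (\<lambda>x. u x t))"

definition foot :: "('a::real_vector \<Rightarrow> real \<Rightarrow> 'a) \<Rightarrow> real \<Rightarrow> real \<Rightarrow> 'a \<Rightarrow> 'a" where
  "foot u dt t x = x - dt *\<^sub>R u x t"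

end

theory Submission
  imports Defs
begin

lemma One_nth: "(One::real^'n) $ i = 1"
proof -
  have "axis i (1::real) \<in> (Basis::(real^'n) set)" by (auto simp: Basis_vec_def)
  then have "(One::real^'n) \<bullet> axis i 1 = 1" by simp
  then show ?thesis by (simp add: inner_axis)
qed

lemma norm_axis_real: "norm (axis i (c::real)) = \<bar>c\<bar>"
proof -
  have "axis i c = c *\<^sub>R axis i (1::real)" by (simp add: vec_eq_iff axis_def)
  then show ?thesis by (simp add: norm_axis_1)
qed

lemma lip_attained:
  assumes "W1inf_on S f"
  shows "0 \<le> lip_const S f \<and> (\<forall>x\<in>S. \<forall>y\<in>S. dist (f x) (f y) \<le> lip_const S f * dist x y)"
proof -
  let ?A = "{L. 0 \<le> L \<and> (\<forall>x\<in>S. \<forall>y\<in>S. dist (f x) (f y) \<le> L * dist x y)}"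
  obtain L where L: "\<forall>x\<in>S. \<forall>y\<in>S. dist (f x) (f y) \<le> L * dist x y"
    using assms unfolding W1inf_on_def by blast
  have "max L 0 \<in> ?A"
  proof -
    have "L * dist x y \<le> max L 0 * dist x y" for x y :: 'a
      by (simp add: mult_right_mono)
    then have "\<forall>x\<in>S. \<forall>y\<in>S. dist (f x) (f y) \<le> max L 0 * dist x y" using L by (meson order_trans)
    then show ?thesis by simp
  qed
  then have ne: "?A \<noteq> {}" by blast
  have nn: "0 \<le> lip_const S f" unfolding lip_const_def
    by (rule cInf_greatest[OF ne]) auto
  have "dist (f x) (f y) \<le> lip_const S f * dist x y" if "x \<in> S" "y \<in> S" for x y
  proof (cases "x = y")
    case True then show ?thesis by simp
  next
    case False
    then have d: "dist x y > 0" by simp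
    have "dist (f x) (f y) / dist x y \<le> lip_const S f" unfolding lip_const_def
    proof (rule cInf_greatest[OF ne])
      fix M assume "M \<in> ?A"
      then have "dist (f x) (f y) \<le> M * dist x y" using that by blast
      then show "dist (f x) (f y) / dist x y \<le> M" using d by (simp add: divide_le_eq)
    qed
    then show ?thesis using d by (simp add: divide_le_eq)
  qed
  then show ?thesis using nn by blast
qed

lemma lip_le:
  assumes "0 \<le> L" "\<forall>x\<in>S. \<forall>y\<in>S. dist (f x) (f y) \<le> L * dist x y"
  shows "lip_const S f \<le> L"
  unfolding lip_const_def by (rule cInf_lower) (use assms in \<open>auto intro!: bdd_belowI[of _ 0]\<close>)

lemma W1inf_on_diff:
  assumes "W1inf_on S f" "W1inf_on S g"
  shows "W1inf_on S (\<lambda>x. f x - g x)"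
proof -
  obtain B1 where B1: "\<forall>x\<in>S. norm (f x) \<le> B1" using assms(1) unfolding W1inf_on_def bounded_iff by auto
  obtain B2 where B2: "\<forall>x\<in>S. norm (g x) \<le> B2" using assms(2) unfolding W1inf_on_def bounded_iff by auto
  obtain L1 where L1: "\<forall>x\<in>S. \<forall>y\<in>S. dist (f x) (f y) \<le> L1 * dist x y"
    using assms(1) unfolding W1inf_on_def by blast
  obtain L2 where L2: "\<forall>x\<in>S. \<forall>y\<in>S. dist (g x) (g y) \<le> L2 * dist x y"
    using assms(2) unfolding W1inf_on_def by blast
  have "bounded ((\<lambda>x. f x - g x) ` S)"
    unfolding bounded_iff
  proof (intro exI ballI)
    fix z assume "z \<in> (\<lambda>x. f x - g x) ` S"
    then obtain x where "x \<in> S" "z = f x - g x" by blast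
    then show "norm z \<le> B1 + B2" using B1 B2 norm_triangle_ineq4[of "f x" "g x"] by force
  qed
  moreover have "\<forall>x\<in>S. \<forall>y\<in>S. dist (f x - g x) (f y - g y) \<le> (L1 + L2) * dist x y"
  proof (intro ballI)
    fix x y assume xy: "x \<in> S" "y \<in> S"
    have e: "f x - g x - (f y - g y) = (f x - f y) - (g x - g y)" by (simp add: algebra_simps)
    have "dist (f x - g x) (f y - g y) \<le> dist (f x) (f y) + dist (g x) (g y)"
      unfolding dist_norm e by (rule norm_triangle_ineq4)
    also have "\<dots> \<le> (L1 + L2) * dist x y" using L1 L2 xy by (simp add: distrib_right add_mono)
    finally show "dist (f x - g x) (f y - g y) \<le> (L1 + L2) * dist x y" .
  qed
  ultimately show ?thesis unfolding W1inf_on_def by blast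
qed

lemma W1inf_norm_add:
  assumes S: "S \<noteq> {}" and g: "W1inf_on S g" and h: "W1inf_on S h"
  shows "W1inf_norm S (\<lambda>x. g x + h x) \<le> W1inf_norm S g + W1inf_norm S h"
proof -
  have bg: "bdd_above ((\<lambda>x. norm (g x)) ` S)"
    using g unfolding W1inf_on_def bounded_iff by (auto intro: bdd_aboveI2)
  have bh: "bdd_above ((\<lambda>x. norm (h x)) ` S)"
    using h unfolding W1inf_on_def bounded_iff by (auto intro: bdd_aboveI2)
  have sup: "(SUP x\<in>S. norm (g x + h x)) \<le> (SUP x\<in>S. norm (g x)) + (SUP x\<in>S. norm (h x))"
  proof (rule cSUP_least[OF S])
    fix x assume x: "x \<in> S"
    have "norm (g x + h x) \<le> norm (g x) + norm (h x)" by (rule norm_triangle_ineq)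
    also have "\<dots> \<le> (SUP x\<in>S. norm (g x)) + (SUP x\<in>S. norm (h x))"
      using cSUP_upper[OF x bg] cSUP_upper[OF x bh] by (rule add_mono)
    finally show "norm (g x + h x) \<le> (SUP x\<in>S. norm (g x)) + (SUP x\<in>S. norm (h x))" .
  qed
  have lg: "0 \<le> lip_const S g \<and> (\<forall>x\<in>S. \<forall>y\<in>S. dist (g x) (g y) \<le> lip_const S g * dist x y)"
    by (rule lip_attained[OF g])
  have lh: "0 \<le> lip_const S h \<and> (\<forall>x\<in>S. \<forall>y\<in>S. dist (h x) (h y) \<le> lip_const S h * dist x y)"
    by (rule lip_attained[OF h])
  have "\<forall>x\<in>S. \<forall>y\<in>S. dist (g x + h x) (g y + h y) \<le> (lip_const S g + lip_const S h) * dist x y"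
  proof (intro ballI)
    fix x y assume xy: "x \<in> S" "y \<in> S"
    have "dist (g x + h x) (g y + h y) \<le> dist (g x) (g y) + dist (h x) (h y)"
      by (rule dist_triangle_add)
    also have "\<dots> \<le> (lip_const S g + lip_const S h) * dist x y"
      using lg lh xy by (simp add: distrib_right add_mono)
    finally show "dist (g x + h x) (g y + h y) \<le> (lip_const S g + lip_const S h) * dist x y" .
  qed
  then have lip: "lip_const S (\<lambda>x. g x + h x) \<le> lip_const S g + lip_const S h"
    using lg lh by (intro lip_le) auto
  show ?thesis unfolding W1inf_norm_def using sup lip by linarith
qed

lemma W1inf_norm_tri:
  assumes S: "S \<noteq> {}" and f: "W1inf_on S f" and g: "W1inf_on S g"
  shows "W1inf_norm S f \<le> W1inf_norm S g + W1inf_norm S (\<lambda>x. f x - g x)"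
  using W1inf_norm_add[OF S g W1inf_on_diff[OF f g]] by simp

lemma W1inf_norm_swap:
  "W1inf_norm S (\<lambda>x. g x - f x) = W1inf_norm S (\<lambda>x. f x - g x)"
proof -
  have n: "norm (g x - f x) = norm (f x - g x)" for x by (rule norm_minus_commute)
  have d: "dist (g x - f x) (g y - f y) = dist (f x - g x) (f y - g y)" for x y
    unfolding dist_norm by (metis minus_diff_eq norm_minus_cancel diff_minus_eq_add uminus_add_conv_diff)
  show ?thesis unfolding W1inf_norm_def lip_const_def n d ..
qed

lemma C0_bound:
  assumes S: "S \<noteq> {}" and reg: "C0_W1inf S u T" and t: "t \<in> {0..T}"
  shows "lip_const S (\<lambda>x. u x t) \<le> C0_W1inf_norm S u T"
proof -
  define F where "F = (\<lambda>t. W1inf_norm S (\<lambda>x. u x t))"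
  have W: "\<forall>t\<in>{0..T}. W1inf_on S (\<lambda>x. u x t)" and
    C: "\<forall>t\<in>{0..T}. \<forall>e>0. \<exists>d>0. \<forall>s\<in>{0..T}. \<bar>s - t\<bar> < d \<longrightarrow>
         W1inf_norm S (\<lambda>x. u x s - u x t) < e"
    using reg unfolding C0_W1inf_def by auto
  have "continuous_on {0..T} F"
    unfolding continuous_on_iff
  proof (intro ballI allI impI)
    fix t e assume t: "t \<in> {0..T}" and e: "(0::real) < e"
    obtain d where d: "d > 0" "\<forall>s\<in>{0..T}. \<bar>s - t\<bar> < d \<longrightarrow> W1inf_norm S (\<lambda>x. u x s - u x t) < e"
      using C t e by blast
    show "\<exists>d>0. \<forall>s\<in>{0..T}. dist s t < d \<longrightarrow> dist (F s) (F t) < e"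
    proof (intro exI conjI ballI impI)
      show "d > 0" by fact
      fix s assume s: "s \<in> {0..T}" and st: "dist s t < d"
      have N: "W1inf_norm S (\<lambda>x. u x s - u x t) < e" using d s st by (simp add: dist_real_def)
      have 1: "F s \<le> F t + W1inf_norm S (\<lambda>x. u x s - u x t)"
        unfolding F_def using W1inf_norm_tri[OF S] W s t by blast
      have 2: "F t \<le> F s + W1inf_norm S (\<lambda>x. u x t - u x s)"
        unfolding F_def using W1inf_norm_tri[OF S] W s t by blast
      have 3: "W1inf_norm S (\<lambda>x. u x t - u x s) = W1inf_norm S (\<lambda>x. u x s - u x t)"
        by (rule W1inf_norm_swap)
      show "dist (F s) (F t) < e" unfolding dist_real_def using 1 2 3 N by linarith
    qed
  qed
  then have "compact (F ` {0..T})" by (intro compact_continuous_image) auto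
  then have bdd: "bdd_above (F ` {0..T})" by (intro bounded_imp_bdd_above compact_imp_bounded)
  have "lip_const S (\<lambda>x. u x t) \<le> F t" unfolding F_def W1inf_norm_def by simp
  also have "F t \<le> (SUP t\<in>{0..T}. F t)" by (rule cSUP_upper[OF t bdd])
  finally show ?thesis unfolding C0_W1inf_norm_def F_def .
qed

lemma face_bound:
  fixes g :: "real^'n \<Rightarrow> real"
  assumes p: "p \<in> cbox 0 One" "p \<notin> unit_cube" and x: "x \<in> unit_cube"
   and lim: "(g \<longlongrightarrow> 0) (at p within unit_cube)"
   and lip: "\<forall>z\<in>unit_cube. \<bar>g x - g z\<bar> \<le> L * dist x z"
  shows "\<bar>g x\<bar> \<le> L * dist x p"
proof -
  have ne: "box 0 (One::real^'n) \<noteq> {}" using x unfolding unit_cube_def by blast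
  have "p \<in> closure unit_cube" using p closure_box[OF ne] unfolding unit_cube_def by simp
  then have "p islimpt unit_cube" using p(2) unfolding closure_def by blast
  then have nb: "at p within unit_cube \<noteq> bot" by (simp add: trivial_limit_within)
  have t: "((\<lambda>z. \<bar>g z\<bar> + L * dist x z) \<longlongrightarrow> \<bar>0\<bar> + L * dist x p) (at p within unit_cube)"
    by (intro tendsto_intros lim)
  have ev: "\<forall>\<^sub>F z in at p within unit_cube. \<bar>g x\<bar> \<le> \<bar>g z\<bar> + L * dist x z"
    unfolding eventually_at_filter
  proof (rule always_eventually, intro allI impI)
    fix z assume "z \<noteq> p" "z \<in> unit_cube"
    then have "\<bar>g x - g z\<bar> \<le> L * dist x z" using lip by blast
    then show "\<bar>g x\<bar> \<le> \<bar>g z\<bar> + L * dist x z" by linarith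
  qed
  have "\<bar>g x\<bar> \<le> \<bar>0\<bar> + L * dist x p"
    by (rule tendsto_le[OF nb t tendsto_const ev])
  then show ?thesis by simp
qed

theorem lemma2:
  fixes u :: "real^'n \<Rightarrow> real \<Rightarrow> real^'n" and T dt :: real
  assumes dim: "CARD('n) = 2 \<or> CARD('n) = 3"
    and reg: "C0_W1inf unit_cube u T"
    and bc: "\<forall>t\<in>{0..T}. \<forall>x n. cube_outward_normal x n \<longrightarrow>
               ((\<lambda>z. u z t \<bullet> n) \<longlongrightarrow> 0) (at x within unit_cube)"
    and dt_pos: "0 < dt" and dt_lt: "dt < T"
    and cfl: "dt * C0_W1inf_norm unit_cube u T < 1"
  shows "\<forall>x\<in>unit_cube. \<forall>t\<in>{dt..T}. foot u dt t x \<in> unit_cube"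
proof (intro ballI)
  fix x :: "real^'n" and t assume x: "x \<in> unit_cube" and t: "t \<in> {dt..T}"
  have t0: "t \<in> {0..T}" using t dt_pos by auto
  have S: "(unit_cube::(real^'n) set) \<noteq> {}" using x by blast
  define L where "L = lip_const unit_cube (\<lambda>x. u x t)"
  have W0: "\<forall>t\<in>{0..T}. W1inf_on unit_cube (\<lambda>x. u x t)"
    using reg unfolding C0_W1inf_def by (rule conjunct1)
  have W: "W1inf_on unit_cube (\<lambda>x. u x t)" using W0 t0 by blast
  have L0: "0 \<le> L" and Lip: "\<forall>x\<in>unit_cube. \<forall>y\<in>unit_cube. dist (u x t) (u y t) \<le> L * dist x y"
    using lip_attained[OF W] unfolding L_def by auto
  have "L \<le> C0_W1inf_norm unit_cube u T" unfolding L_def by (rule C0_bound[OF S reg t0])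
  then have "dt * L \<le> dt * C0_W1inf_norm unit_cube u T"
    using dt_pos by (intro mult_left_mono) auto
  then have dtL: "dt * L < 1" using cfl by linarith
  have xi: "\<forall>j. 0 < x$j \<and> x$j < 1"
  proof
    fix j
    have "(0::real^'n)$j < x$j \<and> x$j < (One::real^'n)$j" using x unfolding unit_cube_def mem_box_cart by blast
    then show "0 < x$j \<and> x$j < 1" unfolding One_nth zero_index .
  qed
  have comp: "\<bar>u x t $ i - u z t $ i\<bar> \<le> L * dist x z" if z: "z \<in> unit_cube" for z i
  proof -
    have "\<bar>u x t $ i - u z t $ i\<bar> = \<bar>(u x t - u z t) $ i\<bar>" by simp
    also have "\<dots> \<le> norm (u x t - u z t)" by (rule component_le_norm_cart)
    also have "\<dots> = dist (u x t) (u z t)" by (simp add: dist_norm)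
    also have "\<dots> \<le> L * dist x z" using Lip x z by blast
    finally show ?thesis .
  qed
  have "0 < (x - dt *\<^sub>R u x t) $ i \<and> (x - dt *\<^sub>R u x t) $ i < 1" for i
  proof -
    define p0 where "p0 = (\<chi> j. if j = i then 0 else x$j)"
    define p1 where "p1 = (\<chi> j. if j = i then 1 else x$j)"
    have p0c: "p0 \<in> cbox 0 One" "p0 \<notin> unit_cube"
      using xi unfolding p0_def unit_cube_def mem_box_cart One_nth zero_index by (auto simp: less_imp_le)
    have p1c: "p1 \<in> cbox 0 One" "p1 \<notin> unit_cube"
      using xi unfolding p1_def unit_cube_def mem_box_cart One_nth zero_index by (auto simp: less_imp_le)
    have n0: "cube_outward_normal p0 (- axis i 1)"
      unfolding cube_outward_normal_def using xi by (intro exI[of _ i]) (simp add: p0_def)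
    have n1: "cube_outward_normal p1 (axis i 1)"
      unfolding cube_outward_normal_def using xi by (intro exI[of _ i]) (simp add: p1_def)
    have lim0: "((\<lambda>z. u z t \<bullet> (- axis i 1)) \<longlongrightarrow> 0) (at p0 within unit_cube)"
      using bc t0 n0 by blast
    have lim1: "((\<lambda>z. u z t \<bullet> axis i 1) \<longlongrightarrow> 0) (at p1 within unit_cube)"
      using bc t0 n1 by blast
    have d0: "dist x p0 = x$i"
    proof -
      have "x - p0 = axis i (x$i)" by (simp add: vec_eq_iff axis_def p0_def)
      then show ?thesis using xi by (simp add: dist_norm norm_axis_real less_imp_le)
    qed
    have d1: "dist x p1 = 1 - x$i"
    proof -
      have "x - p1 = axis i (x$i - 1)" by (simp add: vec_eq_iff axis_def p1_def)
      then show ?thesis using xi by (simp add: dist_norm norm_axis_real less_imp_le)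
    qed
    have b0: "\<bar>u x t \<bullet> (- axis i 1)\<bar> \<le> L * dist x p0"
      by (rule face_bound[OF p0c x lim0]) (use comp in \<open>simp add: inner_axis abs_minus_commute\<close>)
    have b1: "\<bar>u x t \<bullet> axis i 1\<bar> \<le> L * dist x p1"
      by (rule face_bound[OF p1c x lim1]) (use comp in \<open>simp add: inner_axis abs_minus_commute\<close>)
    have a0: "\<bar>u x t $ i\<bar> \<le> L * x$i" using b0 d0 by (simp add: inner_axis)
    have a1: "\<bar>u x t $ i\<bar> \<le> L * (1 - x$i)" using b1 d1 by (simp add: inner_axis)
    have e0: "dt * \<bar>u x t $ i\<bar> \<le> dt * L * x$i" using a0 dt_pos
      by (metis mult.assoc mult_left_mono less_imp_le)
    have e1: "dt * \<bar>u x t $ i\<bar> \<le> dt * L * (1 - x$i)" using a1 dt_pos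
      by (metis mult.assoc mult_left_mono less_imp_le)
    have xp: "0 < x$i" "0 < 1 - x$i" using xi by auto
    have f0: "dt * L * x$i < x$i" using mult_strict_right_mono[OF dtL xp(1)] by simp
    have f1: "dt * L * (1 - x$i) < 1 - x$i" using mult_strict_right_mono[OF dtL xp(2)] by simp
    have c: "(x - dt *\<^sub>R u x t) $ i = x$i - dt * u x t $ i" by simp
    have "dt * u x t $ i \<le> dt * \<bar>u x t $ i\<bar>" "- (dt * u x t $ i) \<le> dt * \<bar>u x t $ i\<bar>"
      using mult_left_mono[OF abs_ge_self[of "u x t $ i"], of dt]
            mult_left_mono[OF abs_ge_minus_self[of "u x t $ i"], of dt] dt_pos by auto
    then show ?thesis unfolding c using e0 e1 f0 f1 by linarith
  qed
  then show "foot u dt t x \<in> unit_cube"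
    unfolding foot_def unit_cube_def mem_box_cart One_nth zero_index by blast
qed
end
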